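(* Let $m_0 = -468$ and $C_0 = -4330$, and let $P = 2^3\cdot 3\cdot 5\cdot 7\cdot 11\cdot 13\cdot 31\cdot 433\cdot 2017\cdot 3253\cdot 8501\cdot 32687\cdot 46649\cdot 4057231$. For $k\in\mathbb{Z}$, let $\mathcal{U}_k$ be the affine scheme over $\mathbb{Z}$ defined by $$(x^2-36)(y^2-36)(z^2-36) - m_0(xyz+C_0)^2 - k = 0.$$ If $k>0$ and $k\equiv 1\pmod P$, then $\mathcal{U}_k(\mathbf{A}_{\mathbb{Z}})\neq\emptyset$.
   Context: For an affine scheme $\mathcal{U}$ of finite type over $\mathbb{Z}$, $\mathcal{U}(\mathbf{A}_{\mathbb{Z}}) = \mathcal{U}(\mathbb{R})\times\prod_{p} \mathcal{U}(\mathbb{Z}_p)$, the product over all primes $p$. Thus the claim is that the equation has a real solution and a solution in $\mathbb{Z}_p^3$ for every prime $p$. *)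

theory Defs
  imports Complex_Main "HOL-Computational_Algebra.Primes" "HOL-Number_Theory.Cong"
begin

definition m0 :: int where "m0 = -468"
definition C0 :: int where "C0 = -4330"
definition P0 :: int where
  "P0 = 2^3 * 3 * 5 * 7 * 11 * 13 * 31 * 433 * 2017 * 3253 * 8501 * 32687 * 46649 * 4057231"

definition U_poly :: "int \<Rightarrow> 'a::comm_ring_1 \<Rightarrow> 'a \<Rightarrow> 'a \<Rightarrow> 'a" where
  "U_poly k x y z = (x^2 - 36) * (y^2 - 36) * (z^2 - 36)
                    - of_int m0 * (x * y * z + of_int C0)^2 - of_int k"

text \<open>p-adic integers as the inverse limit of Z/p^n Z: compatible sequences of
  residues x n in {0..<p^n} with x (n+1) reducing to x n mod p^n.\<close>
definition padic_int :: "int \<Rightarrow> (nat \<Rightarrow> int) set" where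
  "padic_int p = {x. \<forall>n. 0 \<le> x n \<and> x n < p ^ n \<and> x (Suc n) mod p ^ n = x n}"

text \<open>A point of U_k over Z_p: ring operations in the inverse limit are componentwise,
  so the equation holds iff it holds in Z/p^n Z for every n.\<close>
definition has_Zp_point :: "int \<Rightarrow> int \<Rightarrow> bool" where
  "has_Zp_point k p = (\<exists>x\<in>padic_int p. \<exists>y\<in>padic_int p. \<exists>z\<in>padic_int p.
      \<forall>n. U_poly k (x n) (y n) (z n) mod p ^ n = 0)"

definition has_R_point :: "int \<Rightarrow> bool" where
  "has_R_point k = (\<exists>x y z :: real. U_poly k x y z = 0)"

definition has_adelic_point :: "int \<Rightarrow> bool" where
  "has_adelic_point k = (has_R_point k \<and> (\<forall>p::int. prime p \<longrightarrow> has_Zp_point k p))"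

end

theory Submission
  imports Defs
begin

lemma hensel_step:
  fixes p Q L R a b :: int and m n :: nat
  assumes p: "prime p" and du: "2*Q*a + L = p^m * u" and cu: "coprime u p"
    and ba: "[b = a] (mod p^(m+1))" and gb: "p^(2*m+1+n) dvd (Q*b^2 + L*b + R)"
  shows "\<exists>c. [c = b] (mod p^(m+1+n)) \<and> p^(2*m+2+n) dvd (Q*c^2 + L*c + R)"
proof -
  obtain r where r: "b - a = p^(m+1) * r" using ba
    by (metis cong_iff_dvd_diff cong_sym dvdE)
  define u' where "u' = u + 2*Q*p*r"
  have du': "2*Q*b + L = p^m * u'"
  proof -
    have "2*Q*b + L = (2*Q*a + L) + 2*Q*(b-a)" by (simp add: algebra_simps)
    also have "\<dots> = p^m*u + 2*Q*p^(m+1)*r" using du r by simp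
    also have "\<dots> = p^m * u'" unfolding u'_def by (simp add: algebra_simps)
    finally show ?thesis .
  qed
  have "coprime u' p"
  proof -
    have "[u' = u] (mod p)" unfolding u'_def
      by (simp add: cong_iff_dvd_diff)
    then show ?thesis using cu by (metis cong_imp_coprime cong_sym)
  qed
  then obtain v where v: "[u' * v = 1] (mod p)" using cong_solve_coprime_int by blast
  obtain s where s: "Q*b^2 + L*b + R = p^(2*m+1+n) * s" using gb by (auto elim: dvdE)
  define t where "t = - s * v"
  define c where "c = b + p^(m+1+n) * t"
  have "[c = b] (mod p^(m+1+n))" unfolding c_def by (simp add: cong_iff_dvd_diff)
  moreover have "p^(2*m+2+n) dvd (Q*c^2 + L*c + R)"
  proof -
    have e: "Q*c^2 + L*c + R = (Q*b^2 + L*b + R) + p^(m+1+n)*t*(2*Q*b+L) + Q*(p^(m+1+n)*t)^2"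
      unfolding c_def by (simp add: algebra_simps power2_eq_square)
    have X: "p^(m+1+n)*t*(2*Q*b+L) = p^(2*m+1+n) * (t*u')"
    proof -
      have A: "p^(2*m+1+n) = p^(m+1+n) * p^m" by (metis power_add add.commute add.left_commute mult_2 add.assoc)
      have B: "p^(m+1+n)*t*(2*Q*b+L) = (p^(m+1+n) * p^m) * (t*u')"
        unfolding du' by (simp only: mult_ac)
      show ?thesis by (simp only: A B)
    qed
    have Y: "Q*(p^(m+1+n)*t)^2 = p^(2*m+2+n) * (Q*t^2*p^n)"
    proof -
      have "(p^(m+1+n))^2 = p^((m+1+n)*2)" by (rule power_mult[symmetric])
      also have "(m+1+n)*2 = (2*m+2+n)+n" by simp
      finally have C: "(p^(m+1+n))^2 = p^(2*m+2+n) * p^n" by (simp only: power_add)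
      show ?thesis by (simp only: power_mult_distrib C mult_ac)
    qed
    have e2: "Q*c^2 + L*c + R = p^(2*m+1+n) * (s + t*u') + p^(2*m+2+n) * (Q*t^2*p^n)"
      unfolding e s X Y by (simp only: distrib_left add.assoc)
    have "p dvd (s + t*u')"
    proof -
      have "[s + t*u' = s - s*(u'*v)] (mod p)" unfolding t_def by (simp add: algebra_simps)
      moreover have "[s - s*(u'*v) = s - s*1] (mod p)"
        using v by (intro cong_diff cong_refl cong_mult) auto
      ultimately have "[s + t*u' = 0] (mod p)" by (metis cong_trans mult_1_right diff_self)
      then show ?thesis by (simp add: cong_0_iff)
    qed
    then have "p^(2*m+2+n) dvd p^(2*m+1+n) * (s + t*u')"
    proof -
      have "p^(2*m+2+n) = p^(2*m+1+n) * p" by (simp add: power_Suc2[symmetric])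
      then show ?thesis using \<open>p dvd (s + t*u')\<close> by (simp add: mult_dvd_mono)
    qed
    then show ?thesis unfolding e2 by (intro dvd_add) auto
  qed
  ultimately show ?thesis by blast
qed

lemma hensel:
  fixes p Q L R a u :: int and m :: nat
  assumes p: "prime p" and du: "2*Q*a + L = p^m * u" and cu: "coprime u p"
    and ga: "p^(2*m+1) dvd (Q*a^2 + L*a + R)"
  shows "\<exists>x\<in>padic_int p. \<forall>n. p^n dvd (Q*(x n)^2 + L*(x n) + R)"
proof -
  define P where "P = (\<lambda>n b. [b = a] (mod p^(m+1)) \<and> p^(2*m+1+n) dvd (Q*b^2 + L*b + R))"
  have step: "\<exists>c. [c = b] (mod p^(m+1+n)) \<and> P (Suc n) c" if "P n b" for n b
  proof -
    from that have ba: "[b = a] (mod p^(m+1))" and gb: "p^(2*m+1+n) dvd (Q*b^2 + L*b + R)"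
      unfolding P_def by auto
    obtain c where c1: "[c = b] (mod p^(m+1+n))" and c2: "p^(2*m+2+n) dvd (Q*c^2 + L*c + R)"
      using hensel_step[OF p du cu ba gb] by blast
    have "[c = b] (mod p^(m+1))"
      using c1 by (rule cong_dvd_modulus) (simp add: le_imp_power_dvd)
    then have "[c = a] (mod p^(m+1))" using ba by (rule cong_trans)
    moreover have "2*m+1+Suc n = 2*m+2+n" by simp
    ultimately show ?thesis using c1 c2 unfolding P_def by auto
  qed
  define f where "f = rec_nat a (\<lambda>n b. SOME c. [c = b] (mod p^(m+1+n)) \<and> P (Suc n) c)"
  have f0: "f 0 = a" unfolding f_def by simp
  have fS: "f (Suc n) = (SOME c. [c = f n] (mod p^(m+1+n)) \<and> P (Suc n) c)" for n
    unfolding f_def by simp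
  have inv: "P n (f n)" for n
  proof (induction n)
    case 0 then show ?case unfolding P_def f0 using ga by simp
  next
    case (Suc n)
    then show ?case unfolding fS by (rule someI2_ex[OF step]) auto
  qed
  have fcong: "[f (Suc n) = f n] (mod p^(m+1+n))" for n
    unfolding fS by (rule someI2_ex[OF step[OF inv]]) auto
  have p1: "p > 1" using p prime_gt_1_int by blast
  define x where "x = (\<lambda>n. f n mod p^n)"
  have "x \<in> padic_int p"
    unfolding padic_int_def x_def
  proof (intro CollectI allI conjI)
    fix n
    show "0 \<le> f n mod p^n" using p1 by simp
    show "f n mod p^n < p^n" using p1 by simp
    have "[f (Suc n) = f n] (mod p^n)"
      using fcong[of n] by (rule cong_dvd_modulus) (simp add: le_imp_power_dvd)
    then show "f (Suc n) mod p ^ Suc n mod p ^ n = f n mod p ^ n"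
      by (simp add: cong_def mod_mod_cancel le_imp_power_dvd)
  qed
  moreover have "p^n dvd (Q*(x n)^2 + L*(x n) + R)" for n
  proof -
    have "[Q*(x n)^2 + L*(x n) + R = Q*(f n)^2 + L*(f n) + R] (mod p^n)"
      unfolding x_def by (intro cong_add cong_mult cong_pow cong_refl) (simp_all add: cong_def)
    moreover have "p^n dvd (Q*(f n)^2 + L*(f n) + R)"
      using inv[of n] unfolding P_def
      by (meson dvd_trans le_imp_power_dvd le_add2)
    ultimately show ?thesis by (simp add: cong_dvd_iff)
  qed
  ultimately show ?thesis by blast
qed

definition gq :: "int \<Rightarrow> int \<Rightarrow> int" where "gq y z = (y^2-36)*(z^2-36) + 468*y^2*z^2"
definition gl :: "int \<Rightarrow> int \<Rightarrow> int" where "gl y z = -2*468*4330*y*z"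
definition gr :: "int \<Rightarrow> int \<Rightarrow> int \<Rightarrow> int" where
  "gr k y z = -36*(y^2-36)*(z^2-36) + 468*4330^2 - k"

lemma U_expand: "U_poly k x y z = gq y z * x^2 + gl y z * x + gr k y z"
  unfolding U_poly_def m0_def C0_def gq_def gl_def gr_def
  by (simp add: algebra_simps power2_eq_square)

lemma U_cong:
  fixes x y z M :: int
  shows "[U_poly k x (y mod M) (z mod M) = U_poly k x y z] (mod M)"
  unfolding U_poly_def
  by (intro cong_add cong_diff cong_mult cong_pow cong_refl) (simp_all add: cong_def)

lemma const_padic: assumes "p > 1" shows "(\<lambda>n. c mod p^n) \<in> padic_int p"
  unfolding padic_int_def using assms
  by (auto simp: mod_mod_cancel le_imp_power_dvd)

lemma zp_point:
  fixes p a u y z k :: int and m :: nat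
  assumes p: "prime p" and du: "2*gq y z*a + gl y z = p^m * u" and cu: "coprime u p"
    and ga: "p^(2*m+1) dvd (gq y z*a^2 + gl y z*a + gr k y z)"
  shows "has_Zp_point k p"
proof -
  obtain x where x: "x \<in> padic_int p"
    and xd: "\<And>n. p^n dvd (gq y z*(x n)^2 + gl y z*(x n) + gr k y z)"
    using hensel[OF p du cu ga] by blast
  have p1: "p > 1" using p prime_gt_1_int by blast
  have "U_poly k (x n) (y mod p^n) (z mod p^n) mod p^n = 0" for n
  proof -
    have "[U_poly k (x n) (y mod p^n) (z mod p^n) = U_poly k (x n) y z] (mod p^n)"
      by (rule U_cong)
    moreover have "p^n dvd U_poly k (x n) y z" unfolding U_expand using xd by simp
    ultimately show ?thesis by (simp add: cong_dvd_iff)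
  qed
  then have "\<forall>n. U_poly k (x n) ((\<lambda>n. y mod p^n) n) ((\<lambda>n. z mod p^n) n) mod p^n = 0" by simp
  note all = this
  show ?thesis unfolding has_Zp_point_def
    apply (rule bexI[OF _ x])
    apply (rule bexI[OF _ const_padic[OF p1, of y]])
    apply (rule bexI[OF _ const_padic[OF p1, of z]])
    using all by simp
qed

lemma bad_case:
  fixes p q s t u a y z k :: int
  assumes p: "prime p" and pq: "p dvd q" and qP: "q dvd P0" and k: "[k = 1] (mod P0)"
    and bz: "s*u + t*q = 1" and du: "2*gq y z*a + gl y z = u"
    and g1: "q dvd (gq y z*a^2 + gl y z*a + gr 1 y z)"
  shows "has_Zp_point k p"
proof -
  have "\<not> p dvd u"
  proof
    assume "p dvd u"
    then have "p dvd s*u + t*q" using pq by simp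
    then have "p dvd 1" using bz by simp
    then show False using p by (simp add: prime_int_iff)
  qed
  then have cu: "coprime u p" using p by (simp add: prime_imp_coprime ac_simps)
  have "p dvd k - 1" using k qP pq
    by (metis cong_iff_dvd_diff cong_sym dvd_trans)
  moreover have "p dvd (gq y z*a^2 + gl y z*a + gr 1 y z)" using g1 pq by (rule dvd_trans[rotated])
  ultimately have "p dvd (gq y z*a^2 + gl y z*a + gr 1 y z) - (k - 1)" by simp
  moreover have "(gq y z*a^2 + gl y z*a + gr 1 y z) - (k - 1) = gq y z*a^2 + gl y z*a + gr k y z"
    unfolding gr_def by simp
  ultimately have ga: "p^(2*0+1) dvd (gq y z*a^2 + gl y z*a + gr k y z)" by simp
  have du': "2*gq y z*a + gl y z = p^0 * u" using du by simp
  show ?thesis by (rule zp_point[OF p du' cu ga])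
qed

lemma real_point: "has_R_point k"
proof -
  define Lr :: real where "Lr = -2*468*4330*12*(6/25)"
  define Rr :: real where "Rr = -36*108*((6/25)^2-36) + 468*4330^2"
  have e: "U_poly k x 12 (6/25) = Lr*x + Rr - of_int k" for x :: real
    unfolding U_poly_def m0_def C0_def Lr_def Rr_def
    by (simp add: algebra_simps power2_eq_square field_simps)
  have "Lr \<noteq> 0" unfolding Lr_def by simp
  then have "U_poly k ((of_int k - Rr)/Lr) 12 (6/25) = (0::real)" unfolding e by simp
  then show ?thesis unfolding has_R_point_def by blast
qed

lemma prime_dvd_small: "prime (p::int) \<Longrightarrow> p dvd 2 \<Longrightarrow> p = 2"
proof -
  assume "prime p" "p dvd 2"
  then have "p > 1" "p \<le> 2" using prime_gt_1_int zdvd_imp_le by auto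
  then show "p = 2" by simp
qed

lemma generic_case:
  fixes p k :: int
  assumes p: "prime p" and n2: "\<not> p dvd 2" and n3: "\<not> p dvd 3" and n5: "\<not> p dvd 5"
    and n13: "\<not> p dvd 13" and n433: "\<not> p dvd 433"
  shows "has_Zp_point k p"
proof -
  have nd: "\<not> p dvd (2^7 * 3^4 * 5 * 13 * 433)"
    apply (simp only: prime_dvd_mult_iff[OF p] prime_dvd_power_iff[OF p] zero_less_numeral)
    using n2 n3 n5 n13 n433 by blast
  have "\<not> p dvd 5^2" using n5 prime_dvd_power[OF p] by blast
  then have "\<not> p dvd 25" by simp
  then have "coprime 25 p" using p by (simp add: prime_imp_coprime ac_simps)
  then obtain w where w: "[25*w = 1] (mod p)" using cong_solve_coprime_int by blast
  define z where "z = 6*w"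
  have z25: "[25*z = 6] (mod p)"
    using cong_mult[OF cong_refl[of 6] w] unfolding z_def by (simp add: ac_simps)
  define Q where "Q = gq 12 z"
  define L where "L = gl 12 z"
  define R where "R = gr k 12 z"
  have "625*Q = 67500*(25*z)^2 - 2430000" unfolding Q_def gq_def by (simp add: algebra_simps power2_eq_square)
  moreover have "[67500*(25*z)^2 - 2430000 = 67500*6^2 - 2430000] (mod p)"
    by (intro cong_diff cong_mult cong_pow cong_refl z25)
  ultimately have "p dvd 625*Q" by (simp add: cong_0_iff[symmetric])
  moreover have "\<not> p dvd 5^4" using n5 prime_dvd_power[OF p] by blast
  then have "\<not> p dvd 625" by simp
  ultimately have pQ: "p dvd Q" using p by (simp add: prime_dvd_mult_iff)
  have "\<not> p dvd L"
  proof
    assume "p dvd L"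
    then have "p dvd 25*L" by simp
    moreover have "25*L = -48634560 * (25*z)" unfolding L_def gl_def by simp
    moreover have "[-48634560 * (25*z) = -48634560 * 6] (mod p)"
      by (intro cong_mult cong_refl z25)
    ultimately have "p dvd 48634560 * 6"
      by (metis cong_dvd_iff dvd_minus_iff mult_minus_left)
    moreover have "(48634560 * 6::int) = 2^7 * 3^4 * 5 * 13 * 433" by simp
    ultimately show False using nd by simp
  qed
  then have "coprime L p" using p by (metis prime_imp_coprime coprime_commute)
  then obtain Li where Li: "[L*Li = 1] (mod p)" using cong_solve_coprime_int by blast
  define a where "a = -R*Li"
  have e: "Q*a^2 + L*a + R = Q*a^2 + (-R)*(L*Li) + R" unfolding a_def by (simp add: algebra_simps)
  have "[Q*a^2 + (-R)*(L*Li) + R = 0*a^2 + (-R)*1 + R] (mod p)"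
    by (intro cong_add cong_mult cong_refl Li) (use pQ in \<open>simp add: cong_0_iff\<close>)
  then have "[Q*a^2 + L*a + R = 0] (mod p)" unfolding e by simp
  then have ga: "p^(2*0+1) dvd (gq 12 z*a^2 + gl 12 z*a + gr k 12 z)"
    unfolding Q_def L_def R_def by (simp add: cong_0_iff)
  have "[2*Q*a + L = L] (mod p)" using pQ
    by (metis add_0 cong_add_rcancel_0 cong_0_iff dvd_mult mult.commute add.commute cong_add_lcancel_0)
  then have cu: "coprime (2*Q*a + L) p" using \<open>coprime L p\<close> by (metis cong_imp_coprime cong_sym)
  have du: "2*gq 12 z*a + gl 12 z = p^0 * (2*Q*a + L)" unfolding Q_def L_def by simp
  show ?thesis by (rule zp_point[OF p du cu ga])
qed

theorem proposition5p1:
  fixes k :: int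
  assumes "k > 0" and "[k = 1] (mod P0)"
  shows "has_adelic_point k"
proof -
  have kP: "[k = 1] (mod P0)" by fact
  have "has_Zp_point k p" if p: "prime p" for p
  proof (cases "p dvd 2")
    case True
    then have p2: "p = 2" using prime_dvd_small p by blast
    have du: "2*gq 1 1*1 + gl 1 1 = 2^1 * (-2024747)" by (simp add: gq_def gl_def)
    have pr2: "prime (2::int)" by (simp add: prime_int_numeral_eq two_is_prime_nat)
    have "\<not> (2::int) dvd -2024747" by simp
    then have cu: "coprime (-2024747) (2::int)" by (metis prime_imp_coprime coprime_commute pr2)
    have "(8::int) dvd P0" by (simp add: P0_def)
    then have "8 dvd k - 1" using kP by (metis cong_iff_dvd_diff cong_sym dvd_trans)
    moreover have "(8::int) dvd gq 1 1*1^2 + gl 1 1*1 + gr 1 1 1" by (simp add: gq_def gl_def gr_def)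
    ultimately have "(8::int) dvd (gq 1 1*1^2 + gl 1 1*1 + gr 1 1 1) - (k - 1)" by simp
    moreover have "(gq 1 1*1^2 + gl 1 1*1 + gr 1 1 1) - (k - 1) = gq 1 1*1^2 + gl 1 1*1 + gr k 1 1"
      unfolding gr_def by simp
    ultimately have "(8::int) dvd (gq 1 1*1^2 + gl 1 1*1 + gr k 1 1)" by metis
    then have ga: "2^(2*1+1) dvd (gq 1 1*1^2 + gl 1 1*1 + gr k 1 1)" by simp
    show ?thesis unfolding p2 by (rule zp_point[OF pr2 du cu ga])
  next
    case n2: False
    show ?thesis
    proof (cases "p dvd 3")
      case True
      show ?thesis
        by (rule bad_case[OF p True _ kP, where s = "-1" and u = "-4049494" and t = "-1349831" and y = "1" and z = "1" and a = "1"])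
           (simp_all add: P0_def gq_def gl_def gr_def)
    next
      case n3: False
      show ?thesis
      proof (cases "p dvd 5")
        case True
        show ?thesis
          by (rule bad_case[OF p True _ kP, where s = "2" and u = "4608" and t = "-1843" and y = "0" and z = "2" and a = "2"])
             (simp_all add: P0_def gq_def gl_def gr_def)
      next
        case n5: False
        show ?thesis
        proof (cases "p dvd 13")
          case True
          show ?thesis
            by (rule bad_case[OF p True _ kP, where s = "2" and u = "1944" and t = "-299" and y = "0" and z = "3" and a = "1"])
               (simp_all add: P0_def gq_def gl_def gr_def)
        next
          case n13: False
          show ?thesis
          proof (cases "p dvd 433")
            case True
            show ?thesis
              by (rule bad_case[OF p True _ kP, where s = "-93" and u = "-192416256" and t = "-41327279" and y = "2" and z = "24" and a = "1"])
                 (simp_all add: P0_def gq_def gl_def gr_def)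
          next
            case n433: False
            show ?thesis by (rule generic_case[OF p n2 n3 n5 n13 n433])
          qed
        qed
      qed
    qed
  qed
  then show ?thesis unfolding has_adelic_point_def using real_point by blast
qed

end
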